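(* Let $X$ be a hyperbolic approximation of a metric space $Z$, with vertex set $V$. If $v,v'\in V$ are not joined by a radial geodesic, then any branch point of $\{v,v'\}$ is a splitting point.
   Context: Hyperbolic approximation: let $(Z,d)$ be a metric space and fix $r$ with $0<r\le1/6$. For every $k\in\mathbb{Z}$ choose a maximal $r^k$-separated set $V_k\subset Z$ (distinct points at distance $\ge r^k$, maximal with this property). For $v\in V_k$ let $B(v)$ be the ball in $Z$ of radius $2r^k$ centred at $v$, $\bar B(v)$ the closed ball. The vertex set $V$ consists, for each $k$, of the balls $B(v)$, $v\in V_k$ (equal balls from the same level give the same vertex; equal balls at different levels are different vertices); a vertex from level $k$ has level $l(v)=k$, and we write $V_k$ also for the set of vertices of level $k$. Two vertices are joined by an edge iff they are on the same level and their closed balls intersect (horizontal edge), or they are on neighbouring levels $k,k+1$ and the ball of the level-$(k+1)$ vertex is contained in the ball of the level-$k$ vertex (radial edge). $X$ carries the path metric with all edges of length $1$. A radial geodesic is an edge path all of whose edges are radial and along which the level function is monotone. For $V'\subset V$, a vertex $u$ is a cone point of $V'$ if $l(u)\le\inf_{v\in V'}l(v)$ and every $v\in V'$ is connected to $u$ by a radial geodesic; a branch point of $V'$ is a cone point of maximal level. A vertex $v_k\in V_k$ is a splitting point if there is $v_{k+1}\in V_{k+1}$ with $B(v_{k+1})\subsetneq B(v_k)$. *)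

theory Defs
  imports "HOL-Analysis.Analysis"
begin

text \<open>A vertex is a pair (level k, open ball of radius 2 r^k
  about a point of V k); equal balls at the same level are the same vertex.\<close>

definition separated :: "real \<Rightarrow> 'a::metric_space set \<Rightarrow> bool" where
  "separated \<rho> S \<longleftrightarrow> (\<forall>x\<in>S. \<forall>y\<in>S. x \<noteq> y \<longrightarrow> \<rho> \<le> dist x y)"

definition maximal_separated :: "real \<Rightarrow> 'a::metric_space set \<Rightarrow> bool" where
  "maximal_separated \<rho> S \<longleftrightarrow> separated \<rho> S \<and>
     (\<forall>S'. S \<subseteq> S' \<and> separated \<rho> S' \<longrightarrow> S' = S)"

type_synonym 'a hvertex = "int \<times> 'a set"

definition hyp_vertices :: "real \<Rightarrow> (int \<Rightarrow> 'a::metric_space set) \<Rightarrow> 'a hvertex set" where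
  "hyp_vertices r V = {(k, ball v (2 * r powi k)) | k v. v \<in> V k}"

definition level :: "'a hvertex \<Rightarrow> int" where
  "level u = fst u"

definition horizontal_edge :: "real \<Rightarrow> (int \<Rightarrow> 'a::metric_space set) \<Rightarrow> 'a hvertex \<Rightarrow> 'a hvertex \<Rightarrow> bool" where
  "horizontal_edge r V x y \<longleftrightarrow> x \<in> hyp_vertices r V \<and> y \<in> hyp_vertices r V \<and> x \<noteq> y \<and>
     fst x = fst y \<and>
     (\<exists>v w. v \<in> V (fst x) \<and> w \<in> V (fst y) \<and> snd x = ball v (2 * r powi fst x) \<and>
        snd y = ball w (2 * r powi fst y) \<and>
        cball v (2 * r powi fst x) \<inter> cball w (2 * r powi fst y) \<noteq> {})"

definition radial_edge :: "real \<Rightarrow> (int \<Rightarrow> 'a::metric_space set) \<Rightarrow> 'a hvertex \<Rightarrow> 'a hvertex \<Rightarrow> bool" where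
  "radial_edge r V x y \<longleftrightarrow> x \<in> hyp_vertices r V \<and> y \<in> hyp_vertices r V \<and>
     ((fst y = fst x + 1 \<and> snd y \<subseteq> snd x) \<or> (fst x = fst y + 1 \<and> snd x \<subseteq> snd y))"

definition radial_geodesic :: "real \<Rightarrow> (int \<Rightarrow> 'a::metric_space set) \<Rightarrow> 'a hvertex list \<Rightarrow> bool" where
  "radial_geodesic r V ps \<longleftrightarrow> ps \<noteq> [] \<and> set ps \<subseteq> hyp_vertices r V \<and>
     (\<forall>i. Suc i < length ps \<longrightarrow> radial_edge r V (ps ! i) (ps ! Suc i)) \<and>
     (sorted (map level ps) \<or> sorted (rev (map level ps)))"

definition radially_joined :: "real \<Rightarrow> (int \<Rightarrow> 'a::metric_space set) \<Rightarrow> 'a hvertex \<Rightarrow> 'a hvertex \<Rightarrow> bool" where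
  "radially_joined r V u v \<longleftrightarrow> (\<exists>ps. radial_geodesic r V ps \<and> hd ps = u \<and> last ps = v)"

definition cone_point :: "real \<Rightarrow> (int \<Rightarrow> 'a::metric_space set) \<Rightarrow> 'a hvertex set \<Rightarrow> 'a hvertex \<Rightarrow> bool" where
  "cone_point r V V' u \<longleftrightarrow> u \<in> hyp_vertices r V \<and> (\<forall>v\<in>V'. level u \<le> level v) \<and>
     (\<forall>v\<in>V'. radially_joined r V v u)"

definition branch_point :: "real \<Rightarrow> (int \<Rightarrow> 'a::metric_space set) \<Rightarrow> 'a hvertex set \<Rightarrow> 'a hvertex \<Rightarrow> bool" where
  "branch_point r V V' u \<longleftrightarrow> cone_point r V V' u \<and>
     (\<forall>w. cone_point r V V' w \<longrightarrow> level w \<le> level u)"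

definition splitting_point :: "real \<Rightarrow> (int \<Rightarrow> 'a::metric_space set) \<Rightarrow> 'a hvertex \<Rightarrow> bool" where
  "splitting_point r V u \<longleftrightarrow> u \<in> hyp_vertices r V \<and>
     (\<exists>w\<in>hyp_vertices r V. level w = level u + 1 \<and> snd w \<subset> snd u)"

end

theory Submission
  imports Defs
begin

lemma geo_rev: "radial_geodesic r V ps \<Longrightarrow> radial_geodesic r V (rev ps)"
  unfolding radial_geodesic_def
proof (intro conjI, simp, simp, intro allI impI)
  fix i assume a: "ps \<noteq> [] \<and> set ps \<subseteq> hyp_vertices r V \<and>
    (\<forall>i. Suc i < length ps \<longrightarrow> radial_edge r V (ps ! i) (ps ! Suc i)) \<and>
    (sorted (map level ps) \<or> sorted (rev (map level ps)))" and i: "Suc i < length (rev ps)"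
  define j where "j = length ps - Suc (Suc i)"
  have "radial_edge r V (ps!j) (ps!Suc j)" using a i j_def by auto
  moreover have "rev ps ! i = ps ! Suc j" "rev ps ! Suc i = ps ! j" using i j_def
    by (auto simp: rev_nth Suc_diff_Suc)
  ultimately show "radial_edge r V (rev ps ! i) (rev ps ! Suc i)"
    unfolding radial_edge_def by auto
next
  assume a: "ps \<noteq> [] \<and> set ps \<subseteq> hyp_vertices r V \<and>
    (\<forall>i. Suc i < length ps \<longrightarrow> radial_edge r V (ps ! i) (ps ! Suc i)) \<and>
    (sorted (map level ps) \<or> sorted (rev (map level ps)))"
  thus "sorted (map level (rev ps)) \<or> sorted (rev (map level (rev ps)))"
    by (auto simp: rev_map)
qed

lemma step_levels:
  assumes "radial_geodesic r V ps" "Suc i < length ps"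
  shows "level (ps!Suc i) = level (ps!i) + 1 \<or> level (ps!i) = level (ps!Suc i) + 1"
  using assms unfolding radial_geodesic_def radial_edge_def level_def by auto

lemma geo_same_level:
  assumes g: "radial_geodesic r V ps" and eq: "level (last ps) = level (hd ps)"
  shows "hd ps = last ps"
proof (rule ccontr)
  assume ne1: "hd ps \<noteq> last ps"
  have ne: "ps \<noteq> []" using g by (simp add: radial_geodesic_def)
  have hl: "hd ps = ps!0" "last ps = ps!(length ps - 1)" using ne
    by (auto simp: hd_conv_nth last_conv_nth)
  have "length ps \<noteq> 1" using ne1 hl by auto
  hence len: "length ps \<ge> 2" using ne by (cases "length ps") auto
  have pos: "0 < length ps" "1 < length ps" using len by auto
  have st: "level (ps!1) = level (ps!0) + 1 \<or> level (ps!0) = level (ps!1) + 1"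
    using step_levels[OF g, of 0] len by auto
  have "sorted (map level ps) \<or> sorted (rev (map level ps))" using g by (simp add: radial_geodesic_def)
  thus False
  proof
    assume s: "sorted (map level ps)"
    have "level (ps!0) \<le> level (ps!1)" "level (ps!1) \<le> level (ps!(length ps - 1))"
      using sorted_nth_mono[OF s, of 0 1] sorted_nth_mono[OF s, of 1 "length ps - 1"] len pos
      by auto
    thus False using st eq hl by auto
  next
    assume s: "sorted (rev (map level ps))"
    have "level (ps!1) \<le> level (ps!0)" "level (ps!(length ps - 1)) \<le> level (ps!1)"
      using sorted_rev_nth_mono[OF s, of 0 1] sorted_rev_nth_mono[OF s, of 1 "length ps - 1"] len pos by auto
    thus False using st eq hl by auto
  qed
qed

lemma geo_down:
  assumes g: "radial_geodesic r V ps" and lt: "level (last ps) < level (hd ps)"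
  shows "\<exists>w qs. radial_geodesic r V qs \<and> hd qs = hd ps \<and> last qs = w \<and>
     level w = level (last ps) + 1 \<and> snd w \<subseteq> snd (last ps) \<and> w \<in> hyp_vertices r V"
proof -
  have ne: "ps \<noteq> []" using g by (simp add: radial_geodesic_def)
  have hl: "hd ps = ps!0" "last ps = ps!(length ps - 1)" using ne
    by (auto simp: hd_conv_nth last_conv_nth)
  have "length ps \<noteq> 1" using lt hl by auto
  hence len: "length ps \<ge> 2" using ne by (cases "length ps") auto
  have pos: "0 < length ps" "1 < length ps" using len by auto
  have ns: "\<not> sorted (map level ps)"
  proof
    assume s: "sorted (map level ps)"
    have "level (ps!0) \<le> level (ps!(length ps - 1))"
      using sorted_nth_mono[OF s, of 0 "length ps - 1"] len pos
      by auto
    thus False using lt hl by auto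
  qed
  hence s: "sorted (rev (map level ps))" using g by (simp add: radial_geodesic_def)
  define n where "n = length ps"
  define w where "w = ps!(n-2)"
  have sn: "Suc (n-2) = n - 1" using len n_def by auto
  have i1: "Suc (n-2) < length ps" using sn len n_def by simp
  have "radial_edge r V (ps!(n-2)) (ps!Suc(n-2))" using g i1 unfolding radial_geodesic_def by blast
  hence e: "radial_edge r V w (last ps)" using sn hl n_def w_def by simp
  have le: "level (last ps) \<le> level w"
    using sorted_rev_nth_mono[OF s, of "n-2" "n-1"] len unfolding hl w_def n_def by auto
  have lw: "level w = level (last ps) + 1" and sub: "snd w \<subseteq> snd (last ps)" and wv: "w \<in> hyp_vertices r V"
    using e le unfolding radial_edge_def level_def by auto
  define qs where "qs = butlast ps"
  have lq: "length qs = n - 1" using qs_def n_def by simp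
  have qn: "\<And>i. i < n - 1 \<Longrightarrow> qs ! i = ps ! i" using qs_def n_def by (simp add: nth_butlast)
  have gq: "radial_geodesic r V qs"
    unfolding radial_geodesic_def
  proof (intro conjI allI impI)
    show "qs \<noteq> []" using lq len n_def by auto
    show "set qs \<subseteq> hyp_vertices r V" using g qs_def
      by (meson in_set_butlastD radial_geodesic_def subset_iff)
    fix i assume "Suc i < length qs"
    thus "radial_edge r V (qs ! i) (qs ! Suc i)" using g lq qn n_def
      unfolding radial_geodesic_def by auto
  next
    have "sorted (rev (map level qs))" unfolding sorted_rev_iff_nth_mono
      using sorted_rev_nth_mono[OF s] lq qn n_def by auto
    thus "sorted (map level qs) \<or> sorted (rev (map level qs))" by simp
  qed
  have qne: "qs \<noteq> []" using lq len n_def by auto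
  have "hd qs = qs ! 0" using qne by (simp add: hd_conv_nth)
  also have "\<dots> = ps ! 0" using qn len n_def by simp
  finally have h1: "hd qs = hd ps" using hl by simp
  have "n - 1 - 1 = n - 2" by simp
  hence "last qs = qs ! (n-2)" using qne lq by (simp add: last_conv_nth)
  also have "\<dots> = w" using qn len n_def w_def by simp
  finally have h2: "last qs = w" .
  moreover note h1
  ultimately show ?thesis using gq lw sub wv by blast
qed

lemma joined_sym: "radially_joined r V a b \<Longrightarrow> radially_joined r V b a"
  unfolding radially_joined_def
  by (metis geo_rev hd_rev last_rev)

theorem lemma3p4:
  fixes r :: real and V :: "int \<Rightarrow> 'a::metric_space set"
    and v v' u :: "'a hvertex"
  assumes "0 < r" and "r \<le> 1/6"
    and "\<And>k. maximal_separated (r powi k) (V k)"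
    and "v \<in> hyp_vertices r V" and "v' \<in> hyp_vertices r V"
    and "\<not> radially_joined r V v v'"
    and "branch_point r V {v, v'} u"
  shows "splitting_point r V u"
proof (rule ccontr)
  assume ns: "\<not> splitting_point r V u"
  have uv: "u \<in> hyp_vertices r V" and l1: "level u \<le> level v" and l2: "level u \<le> level v'"
    and j1: "radially_joined r V v u" and j2: "radially_joined r V v' u"
    and mx: "\<And>w. cone_point r V {v, v'} w \<Longrightarrow> level w \<le> level u"
    using assms(7) unfolding branch_point_def cone_point_def by auto
  have nsp: "\<And>w. w \<in> hyp_vertices r V \<Longrightarrow> level w = level u + 1 \<Longrightarrow> snd w \<subseteq> snd u \<Longrightarrow> snd w = snd u"
    using ns uv unfolding splitting_point_def by auto
  obtain ps where g1: "radial_geodesic r V ps" "hd ps = v" "last ps = u" using j1 radially_joined_def by blast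
  obtain ps' where g2: "radial_geodesic r V ps'" "hd ps' = v'" "last ps' = u" using j2 radially_joined_def by blast
  show False
  proof (cases "level v = level u")
    case True
    hence "v = u" using geo_same_level[OF g1(1)] g1 by simp
    thus False using j2 assms(6) joined_sym by blast
  next
    case False
    hence lt1: "level u < level v" using l1 by simp
    show False
    proof (cases "level v' = level u")
      case True
      hence "v' = u" using geo_same_level[OF g2(1)] g2 by simp
      thus False using j1 assms(6) by blast
    next
      case False
      hence lt2: "level u < level v'" using l2 by simp
      obtain w qs where w: "radial_geodesic r V qs" "hd qs = v" "last qs = w"
        "level w = level u + 1" "snd w \<subseteq> snd u" "w \<in> hyp_vertices r V"
        using geo_down[OF g1(1)] g1 lt1 by auto
      obtain w' qs' where w': "radial_geodesic r V qs'" "hd qs' = v'" "last qs' = w'"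
        "level w' = level u + 1" "snd w' \<subseteq> snd u" "w' \<in> hyp_vertices r V"
        using geo_down[OF g2(1)] g2 lt2 by auto
      have "snd w = snd u" "snd w' = snd u" using nsp w w' by auto
      hence ww: "w' = w" using w(4) w'(4) unfolding level_def by (simp add: prod_eq_iff)
      have "cone_point r V {v, v'} w"
        unfolding cone_point_def radially_joined_def
        using w w' ww lt1 lt2 by auto
      thus False using mx w(4) by fastforce
    qed
  qed
qed

end
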